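(* Let $G$ be a graph and $k \ge 0$ an integer. Then $G$ has a 2-coloring of cost at most $k$ if and only if there exists a set $S \subseteq E(G)$ of at most $k$ edges such that $G/S$ is bipartite.
   Context: All graphs are finite, simple and undirected. A 2-coloring of $G$ is any function $\phi: V(G)\to\{1,2\}$ (not necessarily proper). A monochromatic component of $\phi$ is a vertex set $X$ such that $G[X]$ is a connected component of $G[\phi^{-1}(1)]$ or of $G[\phi^{-1}(2)]$. The cost of $\phi$ is $\sum_{X} (|X|-1)$, the sum over all monochromatic components $X$ of $\phi$. Contracting an edge $xy$ deletes $x$ and $y$ and replaces them by a new vertex adjacent to exactly the vertices adjacent to at least one of $x,y$. For $S\subseteq E(G)$, $G/S$ is the graph obtained by repeatedly contracting an edge of $S$ until none remains; equivalently, by contracting all edges of a spanning forest of $(V(G),S)$. *)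

theory Defs
  imports Main
begin

definition graph :: "'a set \<Rightarrow> 'a set set \<Rightarrow> bool" where
  "graph V E \<longleftrightarrow> finite V \<and> (\<forall>e\<in>E. \<exists>x y. x \<noteq> y \<and> e = {x, y} \<and> x \<in> V \<and> y \<in> V)"

definition adj_in :: "'a set set \<Rightarrow> 'a set \<Rightarrow> ('a \<times> 'a) set" where
  "adj_in F W = {(x, y). {x, y} \<in> F \<and> x \<in> W \<and> y \<in> W}"

definition components :: "'a set set \<Rightarrow> 'a set \<Rightarrow> 'a set set" where
  "components F W = (\<lambda>x. {y. (x, y) \<in> (adj_in F W)\<^sup>*}) ` W"

text \<open>2-coloring: any function into {1,2} on V (not necessarily proper).\<close>
definition two_coloring :: "'a set \<Rightarrow> ('a \<Rightarrow> nat) \<Rightarrow> bool" where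
  "two_coloring V \<phi> \<longleftrightarrow> \<phi> ` V \<subseteq> {1, 2}"

definition mono_components :: "'a set \<Rightarrow> 'a set set \<Rightarrow> ('a \<Rightarrow> nat) \<Rightarrow> 'a set set" where
  "mono_components V E \<phi> =
     components E {v \<in> V. \<phi> v = 1} \<union> components E {v \<in> V. \<phi> v = 2}"

definition cost :: "'a set \<Rightarrow> 'a set set \<Rightarrow> ('a \<Rightarrow> nat) \<Rightarrow> nat" where
  "cost V E \<phi> = (\<Sum>X\<in>mono_components V E \<phi>. card X - 1)"

text \<open>G/S: vertices are the vertex sets of the components of (V,S) (each such set is
  contracted to one vertex); two distinct such vertices are adjacent iff some edge of G
  joins them.\<close>
definition contract_vertices :: "'a set \<Rightarrow> 'a set set \<Rightarrow> 'a set set" where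
  "contract_vertices V S = components S V"

definition contract_edges :: "'a set \<Rightarrow> 'a set set \<Rightarrow> 'a set set \<Rightarrow> 'a set set set" where
  "contract_edges V E S =
     {{X, Y} | X Y. X \<in> contract_vertices V S \<and> Y \<in> contract_vertices V S \<and> X \<noteq> Y \<and>
                    (\<exists>x\<in>X. \<exists>y\<in>Y. {x, y} \<in> E)}"

definition bipartite :: "'b set \<Rightarrow> 'b set set \<Rightarrow> bool" where
  "bipartite V E \<longleftrightarrow> (\<exists>A B. A \<inter> B = {} \<and> A \<union> B = V \<and>
      (\<forall>x y. {x, y} \<in> E \<longrightarrow> \<not> (x \<in> A \<and> y \<in> A) \<and> \<not> (x \<in> B \<and> y \<in> B)))"

end

theory Submission
  imports Defs
begin

definition cls :: "'a set set \<Rightarrow> 'a set \<Rightarrow> 'a \<Rightarrow> 'a set" where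
  "cls F W x = {y. (x, y) \<in> (adj_in F W)\<^sup>*}"

lemma components_cls: "components F W = cls F W ` W"
  by (simp add: components_def cls_def)

lemma adj_sym: "(u, v) \<in> adj_in F W \<Longrightarrow> (v, u) \<in> adj_in F W"
  by (auto simp: adj_in_def insert_commute)

lemma rt_sym: "(u, v) \<in> (adj_in F W)\<^sup>* \<Longrightarrow> (v, u) \<in> (adj_in F W)\<^sup>*"
proof -
  have "sym (adj_in F W)" by (auto intro: symI adj_sym)
  hence "sym ((adj_in F W)\<^sup>*)" by (rule sym_rtrancl)
  thus "(u, v) \<in> (adj_in F W)\<^sup>* \<Longrightarrow> (v, u) \<in> (adj_in F W)\<^sup>*" by (auto dest: symD)
qed

lemma rt_in: "(u, v) \<in> (adj_in F W)\<^sup>* \<Longrightarrow> u \<in> W \<Longrightarrow> v \<in> W"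
  by (induction rule: rtrancl_induct) (auto simp: adj_in_def)

lemma cls_sub: "x \<in> W \<Longrightarrow> cls F W x \<subseteq> W"
  using rt_in by (auto simp: cls_def)

lemma cls_self: "x \<in> cls F W x"
  by (simp add: cls_def)

lemma cls_eq: "y \<in> cls F W x \<Longrightarrow> cls F W y = cls F W x"
  unfolding cls_def using rt_sym rtrancl_trans by fastforce

lemma cls_iff: "cls F W x = cls F W y \<longleftrightarrow> (x, y) \<in> (adj_in F W)\<^sup>*"
  by (metis cls_eq cls_self cls_def mem_Collect_eq)

lemma cls_disj: "z \<in> cls F W x \<Longrightarrow> z \<in> cls F W y \<Longrightarrow> cls F W x = cls F W y"
  using cls_eq by metis

lemma sum_comps:
  assumes "finite W"
  shows "(\<Sum>X\<in>components F W. card X - 1) = card W - card (components F W)"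
proof -
  let ?C = "components F W"
  have U: "\<Union>?C = W" unfolding components_cls
  proof
    show "\<Union> (cls F W ` W) \<subseteq> W" using cls_sub[of _ W F] by blast
    show "W \<subseteq> \<Union> (cls F W ` W)" using cls_self[of _ F W] by blast
  qed
  have disj: "pairwise disjnt ?C"
    unfolding pairwise_def disjnt_def components_cls using cls_disj[of _ F W] by blast
  have finX: "\<And>X. X \<in> ?C \<Longrightarrow> finite X"
    using finite_subset[OF cls_sub[of _ W F] assms] by (auto simp: components_cls)
  have s: "sum card ?C = card W" using card_Union_disjoint[OF disj finX] U by simp
  have ge: "\<And>X. X \<in> ?C \<Longrightarrow> 1 \<le> card X"
  proof -
    fix X assume "X \<in> ?C"
    then obtain x where "X = cls F W x" by (auto simp: components_cls)
    hence "X \<noteq> {}" using cls_self[of x F W] by auto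
    thus "1 \<le> card X" using finX \<open>X \<in> ?C\<close> by (simp add: Suc_le_eq card_gt_0_iff)
  qed
  have "(\<Sum>X\<in>?C. card X - 1) = sum card ?C - (\<Sum>X\<in>?C. 1)"
    by (rule sum_subtractf_nat) (rule ge)
  thus ?thesis using s by simp
qed

lemma adj_insert2:
  assumes "x \<in> W" "y \<in> W"
  shows "adj_in (insert {x, y} F) W = adj_in F W \<union> {(x, y), (y, x)}"
  using assms by (auto simp: adj_in_def doubleton_eq_iff)

lemma adj_insert_triv:
  assumes "\<not> (\<exists>x y. x \<in> W \<and> y \<in> W \<and> e = {x, y})"
  shows "adj_in (insert e F) W = adj_in F W"
  using assms by (auto simp: adj_in_def)

lemma merge:
  assumes xW: "x \<in> W" "y \<in> W" and nc: "(x, y) \<notin> (adj_in F W)\<^sup>*"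
  shows "(adj_in (insert {x, y} F) W)\<^sup>* =
    (adj_in F W)\<^sup>* \<union> (cls F W x \<union> cls F W y) \<times> (cls F W x \<union> cls F W y)"
proof -
  define R where "R = (adj_in F W)\<^sup>*"
  define R' where "R' = (adj_in (insert {x, y} F) W)\<^sup>*"
  define M where "M = cls F W x \<union> cls F W y"
  have symR: "\<And>a b. (a, b) \<in> R \<Longrightarrow> (b, a) \<in> R" using rt_sym R_def by auto
  have trR: "\<And>a b c. (a, b) \<in> R \<Longrightarrow> (b, c) \<in> R \<Longrightarrow> (a, c) \<in> R"
    unfolding R_def by (rule rtrancl_trans)
  have Mcl: "\<And>a b. a \<in> M \<Longrightarrow> (a, b) \<in> R \<Longrightarrow> b \<in> M"
    unfolding M_def cls_def R_def[symmetric] using trR by blast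
  have Mcl2: "\<And>a b. b \<in> M \<Longrightarrow> (a, b) \<in> R \<Longrightarrow> a \<in> M"
    using Mcl symR by blast
  have xM: "x \<in> M" "y \<in> M" unfolding M_def using cls_self[of x F W] cls_self[of y F W] by auto
  have adjeq: "adj_in (insert {x, y} F) W = adj_in F W \<union> {(x, y), (y, x)}"
    by (rule adj_insert2[OF xW])
  have le: "R' \<subseteq> R \<union> M \<times> M"
  proof
    fix p assume "p \<in> R'"
    then obtain a b where p: "p = (a, b)" and ab: "(a, b) \<in> (adj_in (insert {x, y} F) W)\<^sup>*"
      unfolding R'_def by (cases p) auto
    have "(a, b) \<in> R \<union> M \<times> M" using ab
    proof (induction rule: rtrancl_induct)
      case base
      then show ?case unfolding R_def by simp
    next
      case (step b c)
      have bc: "(b, c) \<in> R \<union> M \<times> M"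
        using step.hyps(2) xM unfolding adjeq R_def by auto
      show ?case using step.IH bc trR Mcl Mcl2 by blast
    qed
    thus "p \<in> R \<union> M \<times> M" using p by simp
  qed
  have RR': "R \<subseteq> R'" unfolding R_def R'_def adjeq by (rule rtrancl_mono) auto
  have xy': "(x, y) \<in> R'" "(y, x) \<in> R'" unfolding R'_def adjeq by auto
  have trR': "\<And>a b c. (a, b) \<in> R' \<Longrightarrow> (b, c) \<in> R' \<Longrightarrow> (a, c) \<in> R'"
    unfolding R'_def by (rule rtrancl_trans)
  have toM: "\<And>a. a \<in> M \<Longrightarrow> ((a, x) \<in> R \<and> (x, a) \<in> R) \<or> ((a, y) \<in> R \<and> (y, a) \<in> R)"
    unfolding M_def cls_def R_def[symmetric] using symR by blast
  have "M \<times> M \<subseteq> R'"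
  proof safe
    fix a b assume a: "a \<in> M" and b: "b \<in> M"
    from toM[OF a] toM[OF b] show "(a, b) \<in> R'"
      using RR' xy' trR' by blast
  qed
  hence "R' = R \<union> M \<times> M" using le RR' by blast
  thus ?thesis unfolding R_def R'_def M_def .
qed

lemma merge_card:
  assumes fin: "finite W" and xW: "x \<in> W" "y \<in> W" and nc: "(x, y) \<notin> (adj_in F W)\<^sup>*"
  shows "card (components F W) = Suc (card (components (insert {x, y} F) W))"
proof -
  define M where "M = cls F W x \<union> cls F W y"
  have Mcases: "cls F W a = cls F W x \<or> cls F W a = cls F W y" if a: "a \<in> M" for a
    using a unfolding M_def using cls_eq[of a F W x] cls_eq[of a F W y] by blast
  have Mcl: "b \<in> M" if a: "a \<in> M" and b: "b \<in> cls F W a" for a b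
    using Mcases[OF a] b unfolding M_def by auto
  have xM: "x \<in> M" "y \<in> M" unfolding M_def using cls_self[of x F W] cls_self[of y F W] by auto
  have c'eq: "cls (insert {x, y} F) W u = (if u \<in> M then M else cls F W u)" for u
  proof -
    have "cls (insert {x, y} F) W u = {v. (u, v) \<in> (adj_in F W)\<^sup>* \<or> (u \<in> M \<and> v \<in> M)}"
      unfolding cls_def merge[OF xW nc] M_def by auto
    also have "\<dots> = (if u \<in> M then M else cls F W u)"
    proof (cases "u \<in> M")
      case True
      have "(u, v) \<in> (adj_in F W)\<^sup>* \<Longrightarrow> v \<in> M" for v using Mcl[OF True, of v] by (simp add: cls_def)
      then show ?thesis using True by auto
    next
      case False
      then show ?thesis by (simp add: cls_def)
    qed
    finally show ?thesis .
  qed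
  have C'eq: "components (insert {x, y} F) W = insert M (cls F W ` (W - M))"
  proof -
    have "components (insert {x, y} F) W = (\<lambda>u. if u \<in> M then M else cls F W u) ` W"
      unfolding components_cls using c'eq by simp
    also have "\<dots> = insert M (cls F W ` (W - M))"
    proof
      show "(\<lambda>u. if u \<in> M then M else cls F W u) ` W \<subseteq> insert M (cls F W ` (W - M))" by auto
      show "insert M (cls F W ` (W - M)) \<subseteq> (\<lambda>u. if u \<in> M then M else cls F W u) ` W"
      proof
        fix Z assume "Z \<in> insert M (cls F W ` (W - M))"
        then show "Z \<in> (\<lambda>u. if u \<in> M then M else cls F W u) ` W"
        proof
          assume "Z = M" thus ?thesis using xW(1) xM(1) by (auto intro!: image_eqI[of _ _ x])
        next
          assume "Z \<in> cls F W ` (W - M)"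
          then obtain u where "u \<in> W" "u \<notin> M" "Z = cls F W u" by auto
          thus ?thesis by (auto intro!: image_eqI[of _ _ u])
        qed
      qed
    qed
    finally show ?thesis .
  qed
  have Deq: "cls F W ` (W - M) = cls F W ` W - {cls F W x, cls F W y}"
  proof
    show "cls F W ` (W - M) \<subseteq> cls F W ` W - {cls F W x, cls F W y}"
    proof
      fix Z assume "Z \<in> cls F W ` (W - M)"
      then obtain u where u: "u \<in> W" "u \<notin> M" "Z = cls F W u" by auto
      have "cls F W u \<noteq> cls F W x" using u cls_self[of u F W] unfolding M_def by auto
      moreover have "cls F W u \<noteq> cls F W y" using u cls_self[of u F W] unfolding M_def by auto
      ultimately show "Z \<in> cls F W ` W - {cls F W x, cls F W y}" using u by auto
    qed
    show "cls F W ` W - {cls F W x, cls F W y} \<subseteq> cls F W ` (W - M)"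
    proof
      fix Z assume Z: "Z \<in> cls F W ` W - {cls F W x, cls F W y}"
      then obtain u where u: "u \<in> W" "Z = cls F W u" by auto
      have "u \<notin> M"
      proof
        assume "u \<in> M"
        from Mcases[OF this] show False using Z u by auto
      qed
      thus "Z \<in> cls F W ` (W - M)" using u by auto
    qed
  qed
  have neq: "cls F W x \<noteq> cls F W y" using nc cls_iff[of F W x y] by simp
  have Mnot: "M \<notin> cls F W ` W"
  proof
    assume "M \<in> cls F W ` W"
    then obtain u where u: "M = cls F W u" by auto
    have "cls F W x = cls F W u" using xM(1) u cls_eq[of x F W u] by simp
    moreover have "cls F W y = cls F W u" using xM(2) u cls_eq[of y F W u] by simp
    ultimately show False using neq by simp
  qed
  have finC: "finite (cls F W ` W)" using fin by simp
  have c1: "card (components (insert {x, y} F) W) = Suc (card (cls F W ` W - {cls F W x, cls F W y}))"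
    unfolding C'eq Deq using finC Mnot by (simp add: card_insert_disjoint)
  have sub: "{cls F W x, cls F W y} \<subseteq> cls F W ` W" using xW by auto
  have c2: "card (cls F W ` W - {cls F W x, cls F W y}) = card (cls F W ` W) - 2"
    using card_Diff_subset[OF _ sub] neq by simp
  have c3: "2 \<le> card (cls F W ` W)" using card_mono[OF finC sub] neq by simp
  show ?thesis using c1 c2 c3 by (simp add: components_cls)
qed

lemma adj_insert: "adj_in (insert e F) W = adj_in F W \<union> {(u, v). e = {u, v} \<and> u \<in> W \<and> v \<in> W}"
  by (auto simp: adj_in_def)

lemma rel_cong:
  assumes "(adj_in F' W)\<^sup>* = (adj_in F W)\<^sup>*"
  shows "(adj_in (insert e F') W)\<^sup>* = (adj_in (insert e F) W)\<^sup>*"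
proof -
  let ?P = "{(u, v). e = {u, v} \<and> u \<in> W \<and> v \<in> W}"
  have "(adj_in (insert e F') W)\<^sup>* = ((adj_in F' W)\<^sup>* \<union> ?P\<^sup>*)\<^sup>*"
    unfolding adj_insert by (rule rtrancl_Un_rtrancl[symmetric])
  also have "\<dots> = ((adj_in F W)\<^sup>* \<union> ?P\<^sup>*)\<^sup>*" using assms by simp
  also have "\<dots> = (adj_in (insert e F) W)\<^sup>*"
    unfolding adj_insert by (rule rtrancl_Un_rtrancl)
  finally show ?thesis .
qed

lemma comps_cong:
  "(adj_in F' W)\<^sup>* = (adj_in F W)\<^sup>* \<Longrightarrow> components F' W = components F W"
  by (simp add: components_def)

lemma step_cases:
  "(adj_in (insert e F) W)\<^sup>* = (adj_in F W)\<^sup>* \<or>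
   (\<exists>x y. x \<in> W \<and> y \<in> W \<and> e = {x, y} \<and> (x, y) \<notin> (adj_in F W)\<^sup>*)"
proof (cases "\<exists>x y. x \<in> W \<and> y \<in> W \<and> e = {x, y}")
  case False
  then show ?thesis using adj_insert_triv[OF False, of F] by simp
next
  case True
  then obtain x y where xy: "x \<in> W" "y \<in> W" "e = {x, y}" by blast
  show ?thesis
  proof (cases "(x, y) \<in> (adj_in F W)\<^sup>*")
    case True
    have yx: "(y, x) \<in> (adj_in F W)\<^sup>*" using rt_sym[OF True] .
    have "(adj_in F W \<union> {(x, y), (y, x)})\<^sup>* = (adj_in F W)\<^sup>*"
      by (rule rtrancl_subset) (use True yx in auto)
    then show ?thesis using adj_insert2[OF xy(1,2), of F] xy(3) by simp
  next
    case False
    then show ?thesis using xy by blast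
  qed
qed

lemma comps_empty: "components {} W = (\<lambda>x. {x}) ` W"
proof -
  have "adj_in {} W = {}" by (simp add: adj_in_def)
  thus ?thesis by (simp add: components_def)
qed

lemma card_comps_empty: "card (components {} W) = card W"
  unfolding comps_empty by (rule card_image) (auto simp: inj_on_def)

lemma lower:
  assumes "finite F" "finite W"
  shows "card W \<le> card F + card (components F W)"
  using assms(1)
proof (induction F rule: finite_induct)
  case empty
  then show ?case using card_comps_empty[of W] by simp
next
  case (insert e F)
  from step_cases[of e F W] show ?case
  proof
    assume "(adj_in (insert e F) W)\<^sup>* = (adj_in F W)\<^sup>*"
    hence "components (insert e F) W = components F W" by (rule comps_cong)
    thus ?case using insert by simp
  next
    assume "\<exists>x y. x \<in> W \<and> y \<in> W \<and> e = {x, y} \<and> (x, y) \<notin> (adj_in F W)\<^sup>*"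
    then obtain x y where xy: "x \<in> W" "y \<in> W" "e = {x, y}" "(x, y) \<notin> (adj_in F W)\<^sup>*" by blast
    have "card (components F W) = Suc (card (components (insert e F) W))"
      using merge_card[OF assms(2) xy(1,2,4)] xy(3) by simp
    thus ?case using insert by simp
  qed
qed

lemma forest:
  assumes "finite F" "finite W"
  shows "\<exists>F'\<subseteq>F. (adj_in F' W)\<^sup>* = (adj_in F W)\<^sup>* \<and> card F' + card (components F W) \<le> card W"
  using assms(1)
proof (induction F rule: finite_induct)
  case empty
  then show ?case using card_comps_empty[of W] by simp
next
  case (insert e F)
  then obtain F' where F': "F' \<subseteq> F" "(adj_in F' W)\<^sup>* = (adj_in F W)\<^sup>*"
    "card F' + card (components F W) \<le> card W" by blast
  from step_cases[of e F W] show ?case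
  proof
    assume h: "(adj_in (insert e F) W)\<^sup>* = (adj_in F W)\<^sup>*"
    hence "components (insert e F) W = components F W" by (rule comps_cong)
    thus ?case using F' h by (intro exI[of _ F']) auto
  next
    assume "\<exists>x y. x \<in> W \<and> y \<in> W \<and> e = {x, y} \<and> (x, y) \<notin> (adj_in F W)\<^sup>*"
    then obtain x y where xy: "x \<in> W" "y \<in> W" "e = {x, y}" "(x, y) \<notin> (adj_in F W)\<^sup>*" by blast
    have c: "card (components F W) = Suc (card (components (insert e F) W))"
      using merge_card[OF assms(2) xy(1,2,4)] xy(3) by simp
    have eF': "e \<notin> F'"
    proof
      assume "e \<in> F'"
      hence "(x, y) \<in> adj_in F' W" using xy by (auto simp: adj_in_def)
      hence "(x, y) \<in> (adj_in F W)\<^sup>*" using F'(2) by (metis r_into_rtrancl)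
      thus False using xy(4) by simp
    qed
    have finF': "finite F'" using F'(1) insert(1) finite_subset by blast
    have r: "(adj_in (insert e F') W)\<^sup>* = (adj_in (insert e F) W)\<^sup>*" by (rule rel_cong[OF F'(2)])
    have "card (insert e F') = Suc (card F')" using eF' finF' by simp
    thus ?case using F' r c by (intro exI[of _ "insert e F'"]) auto
  qed
qed

lemma back_cls:
  assumes SE: "S \<subseteq> E"
    and ind: "\<forall>X Y. {X, Y} \<in> contract_edges V E S \<longrightarrow> \<not> (X \<in> D \<and> Y \<in> D)"
    and u: "u \<in> V" "cls S V u \<in> D"
  shows "cls E {v \<in> V. cls S V v \<in> D} u = cls S V u"
proof -
  let ?W = "{v \<in> V. cls S V v \<in> D}"
  have 1: "(u, v) \<in> (adj_in S V)\<^sup>*" if "(u, v) \<in> (adj_in E ?W)\<^sup>*" for v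
    using that
  proof (induction rule: rtrancl_induct)
    case base
    then show ?case by simp
  next
    case (step w v)
    from step.hyps(2) have wv: "w \<in> V" "v \<in> V" "cls S V w \<in> D" "cls S V v \<in> D" "{w, v} \<in> E"
      by (auto simp: adj_in_def)
    have "cls S V w = cls S V v"
    proof (rule ccontr)
      assume ne: "cls S V w \<noteq> cls S V v"
      have "{cls S V w, cls S V v} \<in> contract_edges V E S"
        unfolding contract_edges_def contract_vertices_def components_cls
        using wv ne cls_self[of w S V] cls_self[of v S V] by blast
      thus False using ind wv by blast
    qed
    hence "(w, v) \<in> (adj_in S V)\<^sup>*" using cls_iff by metis
    thus ?case using step.IH rtrancl_trans by metis
  qed
  have 2: "(u, v) \<in> (adj_in E ?W)\<^sup>*" if "(u, v) \<in> (adj_in S V)\<^sup>*" for v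
    using that
  proof (induction rule: rtrancl_induct)
    case base
    then show ?case by simp
  next
    case (step w v)
    from step.hyps(2) have wv: "w \<in> V" "v \<in> V" "{w, v} \<in> S"
      by (auto simp: adj_in_def)
    have uw: "(u, w) \<in> (adj_in S V)\<^sup>*" by (rule step.hyps(1))
    have uv: "(u, v) \<in> (adj_in S V)\<^sup>*" using uw step.hyps(2) by (rule rtrancl_into_rtrancl)
    have "cls S V w = cls S V u" using uw cls_iff[of S V u w] by simp
    moreover have "cls S V v = cls S V u" using uv cls_iff[of S V u v] by simp
    ultimately have "(w, v) \<in> adj_in E ?W" using wv SE u by (auto simp: adj_in_def)
    thus ?case by (rule rtrancl_into_rtrancl[OF step.IH])
  qed
  show ?thesis
  proof (rule set_eqI)
    fix v show "v \<in> cls E ?W u \<longleftrightarrow> v \<in> cls S V u"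
      using 1[of v] 2[of v] unfolding cls_def[of E ?W u] cls_def[of S V u] by blast
  qed
qed

definition samecol :: "'a set set \<Rightarrow> ('a \<Rightarrow> nat) \<Rightarrow> 'a set set" where
  "samecol E \<phi> = {e \<in> E. \<forall>a\<in>e. \<forall>b\<in>e. \<phi> a = \<phi> b}"

lemma samecol_adj: "(a, b) \<in> adj_in (samecol E \<phi>) V \<Longrightarrow> \<phi> a = \<phi> b"
  unfolding adj_in_def samecol_def by blast

lemma col: "(u, v) \<in> (adj_in (samecol E \<phi>) V)\<^sup>* \<Longrightarrow> \<phi> v = \<phi> u"
proof (induction rule: rtrancl_induct)
  case base
  then show ?case by simp
next
  case (step y z)
  then show ?case using samecol_adj[OF step.hyps(2)] by simp
qed

lemma fwd_cls:
  assumes u: "u \<in> V"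
  shows "cls E {v \<in> V. \<phi> v = \<phi> u} u = cls (samecol E \<phi>) V u"
proof -
  let ?W = "{v \<in> V. \<phi> v = \<phi> u}"
  let ?F = "samecol E \<phi>"
  have "adj_in E ?W \<subseteq> adj_in ?F V" by (auto simp: adj_in_def samecol_def)
  hence sub: "(adj_in E ?W)\<^sup>* \<subseteq> (adj_in ?F V)\<^sup>*" by (rule rtrancl_mono)
  have 1: "(u, v) \<in> (adj_in ?F V)\<^sup>*" if "(u, v) \<in> (adj_in E ?W)\<^sup>*" for v
    using subsetD[OF sub that] .
  have 2: "(u, v) \<in> (adj_in E ?W)\<^sup>*" if "(u, v) \<in> (adj_in ?F V)\<^sup>*" for v
    using that
  proof (induction rule: rtrancl_induct)
    case base
    then show ?case by simp
  next
    case (step w v)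
    have cw: "\<phi> w = \<phi> u" using col[OF step.hyps(1)] .
    from step.hyps(2) have wv: "w \<in> V" "v \<in> V" "{w, v} \<in> E"
      by (auto simp: adj_in_def samecol_def)
    have "\<phi> w = \<phi> v" by (rule samecol_adj[OF step.hyps(2)])
    hence "(w, v) \<in> adj_in E ?W" using cw wv by (auto simp: adj_in_def)
    thus ?case by (rule rtrancl_into_rtrancl[OF step.IH])
  qed
  show ?thesis
  proof (rule set_eqI)
    fix v show "v \<in> cls E ?W u \<longleftrightarrow> v \<in> cls ?F V u"
      using 1[of v] 2[of v] unfolding cls_def[of E ?W u] cls_def[of ?F V u] by blast
  qed
qed

lemma mono_samecol:
  assumes "two_coloring V \<phi>"
  shows "mono_components V E \<phi> = components (samecol E \<phi>) V"
proof -
  let ?F = "samecol E \<phi>"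
  have eq: "components E {v \<in> V. \<phi> v = c} = cls ?F V ` {v \<in> V. \<phi> v = c}" for c
  proof -
    have "components E {v \<in> V. \<phi> v = c} = cls E {v \<in> V. \<phi> v = c} ` {v \<in> V. \<phi> v = c}"
      by (rule components_cls)
    also have "\<dots> = cls ?F V ` {v \<in> V. \<phi> v = c}"
    proof (rule image_cong[OF refl])
      fix u assume "u \<in> {v \<in> V. \<phi> v = c}"
      hence "u \<in> V" "\<phi> u = c" by auto
      thus "cls E {v \<in> V. \<phi> v = c} u = cls ?F V u" using fwd_cls[of u V E \<phi>] by simp
    qed
    finally show ?thesis .
  qed
  have V: "{v \<in> V. \<phi> v = 1} \<union> {v \<in> V. \<phi> v = 2} = V"
    using assms by (auto simp: two_coloring_def)
  have "cls ?F V ` {v \<in> V. \<phi> v = 1} \<union> cls ?F V ` {v \<in> V. \<phi> v = 2} = cls ?F V ` V"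
    unfolding image_Un[symmetric] V ..
  thus ?thesis unfolding mono_components_def eq components_cls[of ?F V] .
qed

theorem lemma1:
  fixes V :: "'a set" and E :: "'a set set" and k :: nat
  assumes "graph V E"
  shows "(\<exists>\<phi>. two_coloring V \<phi> \<and> cost V E \<phi> \<le> k) \<longleftrightarrow>
         (\<exists>S. S \<subseteq> E \<and> card S \<le> k \<and>
              bipartite (contract_vertices V S) (contract_edges V E S))"
proof -
  have finV: "finite V" using assms by (simp add: graph_def)
  have EV: "E \<subseteq> Pow V"
  proof
    fix e assume "e \<in> E"
    then obtain x y where "e = {x, y}" "x \<in> V" "y \<in> V" using assms unfolding graph_def by meson
    thus "e \<in> Pow V" by simp
  qed
  have finE: "finite E" by (rule finite_subset[OF EV]) (simp add: finV)
  show ?thesis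
  proof
    assume "\<exists>\<phi>. two_coloring V \<phi> \<and> cost V E \<phi> \<le> k"
    then obtain \<phi> where tc: "two_coloring V \<phi>" and ck: "cost V E \<phi> \<le> k" by blast
    let ?F = "samecol E \<phi>"
    have FE: "?F \<subseteq> E" by (auto simp: samecol_def)
    have finF: "finite ?F" using finE FE finite_subset by blast
    obtain S where S: "S \<subseteq> ?F" "(adj_in S V)\<^sup>* = (adj_in ?F V)\<^sup>*"
      "card S + card (components ?F V) \<le> card V"
      using forest[OF finF finV] by blast
    have mc: "mono_components V E \<phi> = components ?F V" by (rule mono_samecol[OF tc])
    have "cost V E \<phi> = card V - card (components ?F V)"
      unfolding cost_def mc by (rule sum_comps[OF finV])
    hence cardS: "card S \<le> k" using S(3) ck by linarith
    have SE: "S \<subseteq> E" using S(1) FE by blast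
    have cv: "contract_vertices V S = cls ?F V ` V"
      using comps_cong[OF S(2)] by (simp add: contract_vertices_def components_cls)
    define A where "A = cls ?F V ` {v \<in> V. \<phi> v = 1}"
    define B where "B = cls ?F V ` {v \<in> V. \<phi> v = 2}"
    have edge: "\<not> (X \<in> cls ?F V ` {v \<in> V. \<phi> v = c} \<and> Y \<in> cls ?F V ` {v \<in> V. \<phi> v = c})"
      if XYe: "{X, Y} \<in> contract_edges V E S" for X Y c
    proof
      let ?D = "cls ?F V ` {v \<in> V. \<phi> v = c}"
      assume XY: "X \<in> ?D \<and> Y \<in> ?D"
      from XYe obtain X0 Y0 where eq: "{X, Y} = {X0, Y0}" and ne: "X0 \<noteq> Y0"
        and ex: "\<exists>x\<in>X0. \<exists>y\<in>Y0. {x, y} \<in> E"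
        unfolding contract_edges_def mem_Collect_eq by (elim exE conjE) (rule that)
      from ex obtain x' y' where x': "x' \<in> X0" and y': "y' \<in> Y0" and e: "{x', y'} \<in> E"
        by (elim bexE)
      have "X0 \<in> {X, Y}" "Y0 \<in> {X, Y}" using eq by auto
      hence "X0 \<in> ?D" "Y0 \<in> ?D" using XY by auto
      then obtain u0 w0 where u0: "u0 \<in> V" "\<phi> u0 = c" "X0 = cls ?F V u0"
        and w0: "w0 \<in> V" "\<phi> w0 = c" "Y0 = cls ?F V w0" by blast
      have xr: "(u0, x') \<in> (adj_in ?F V)\<^sup>*" using x' u0(3) by (simp add: cls_def)
      have yr: "(w0, y') \<in> (adj_in ?F V)\<^sup>*" using y' w0(3) by (simp add: cls_def)
      have cx: "\<phi> x' = c" using col[OF xr] u0(2) by simp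
      have cy: "\<phi> y' = c" using col[OF yr] w0(2) by simp
      have xV: "x' \<in> V" using rt_in[OF xr u0(1)] .
      have yV: "y' \<in> V" using rt_in[OF yr w0(1)] .
      have "{x', y'} \<in> ?F" using e cx cy by (auto simp: samecol_def)
      hence "(x', y') \<in> adj_in ?F V" using xV yV by (simp add: adj_in_def)
      hence "cls ?F V x' = cls ?F V y'" using cls_iff by (metis r_into_rtrancl)
      moreover have "cls ?F V x' = X0" using cls_eq[of x' ?F V u0] x' u0(3) by simp
      moreover have "cls ?F V y' = Y0" using cls_eq[of y' ?F V w0] y' w0(3) by simp
      ultimately show False using ne by simp
    qed
    have disj: "A \<inter> B = {}"
    proof (rule ccontr)
      assume "A \<inter> B \<noteq> {}"
      then obtain u w where u: "u \<in> V" "\<phi> u = 1" and w: "w \<in> V" "\<phi> w = 2"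
        and eq: "cls ?F V u = cls ?F V w" unfolding A_def B_def by blast
      have "(u, w) \<in> (adj_in ?F V)\<^sup>*" using eq cls_iff by metis
      from col[OF this] show False using u w by simp
    qed
    have V: "{v \<in> V. \<phi> v = 1} \<union> {v \<in> V. \<phi> v = 2} = V"
      using tc by (auto simp: two_coloring_def)
    have un: "A \<union> B = cls ?F V ` V"
      unfolding A_def B_def image_Un[symmetric] V ..
    have bip: "bipartite (contract_vertices V S) (contract_edges V E S)"
      unfolding bipartite_def cv
    proof (rule exI[of _ A], rule exI[of _ B], intro conjI allI impI)
      show "A \<inter> B = {}" by (rule disj)
      show "A \<union> B = cls ?F V ` V" by (rule un)
      fix x y assume h: "{x, y} \<in> contract_edges V E S"
      show "\<not> (x \<in> A \<and> y \<in> A)" unfolding A_def by (rule edge[OF h])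
      show "\<not> (x \<in> B \<and> y \<in> B)" unfolding B_def by (rule edge[OF h])
    qed
    show "\<exists>S. S \<subseteq> E \<and> card S \<le> k \<and> bipartite (contract_vertices V S) (contract_edges V E S)"
      using SE cardS bip by blast
  next
    assume "\<exists>S. S \<subseteq> E \<and> card S \<le> k \<and> bipartite (contract_vertices V S) (contract_edges V E S)"
    then obtain S where SE: "S \<subseteq> E" and cS: "card S \<le> k"
      and bip: "bipartite (contract_vertices V S) (contract_edges V E S)" by blast
    have cvS: "contract_vertices V S = cls S V ` V"
      unfolding contract_vertices_def components_cls ..
    from bip obtain A B where AB: "A \<inter> B = {}" "A \<union> B = cls S V ` V"
      and edge: "\<forall>x y. {x, y} \<in> contract_edges V E S \<longrightarrow> \<not> (x \<in> A \<and> y \<in> A) \<and> \<not> (x \<in> B \<and> y \<in> B)"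
      using bip unfolding bipartite_def cvS by (elim exE conjE) (rule that)
    define \<phi> where "\<phi> v = (if cls S V v \<in> A then 1 else 2::nat)" for v
    have tc: "two_coloring V \<phi>" by (auto simp: two_coloring_def \<phi>_def)
    have W1: "{v \<in> V. \<phi> v = 1} = {v \<in> V. cls S V v \<in> A}" by (auto simp: \<phi>_def)
    have W2: "{v \<in> V. \<phi> v = 2} = {v \<in> V. cls S V v \<in> B}"
    proof -
      have "cls S V v \<in> A \<or> cls S V v \<in> B" if "v \<in> V" for v
        using AB(2) that by (metis UnE image_eqI)
      thus ?thesis using AB(1) by (auto simp: \<phi>_def)
    qed
    have indA: "\<forall>X Y. {X, Y} \<in> contract_edges V E S \<longrightarrow> \<not> (X \<in> A \<and> Y \<in> A)" using edge by simp
    have indB: "\<forall>X Y. {X, Y} \<in> contract_edges V E S \<longrightarrow> \<not> (X \<in> B \<and> Y \<in> B)" using edge by simp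
    have cD: "components E {v \<in> V. cls S V v \<in> D} = cls S V ` {v \<in> V. cls S V v \<in> D}"
      if ind: "\<forall>X Y. {X, Y} \<in> contract_edges V E S \<longrightarrow> \<not> (X \<in> D \<and> Y \<in> D)" for D
      unfolding components_cls
    proof (rule image_cong[OF refl])
      fix u assume "u \<in> {v \<in> V. cls S V v \<in> D}"
      hence "u \<in> V" "cls S V u \<in> D" by auto
      thus "cls E {v \<in> V. cls S V v \<in> D} u = cls S V u" by (rule back_cls[OF SE ind])
    qed
    have VAB: "{v \<in> V. cls S V v \<in> A} \<union> {v \<in> V. cls S V v \<in> B} = V"
    proof
      show "{v \<in> V. cls S V v \<in> A} \<union> {v \<in> V. cls S V v \<in> B} \<subseteq> V" by blast
      show "V \<subseteq> {v \<in> V. cls S V v \<in> A} \<union> {v \<in> V. cls S V v \<in> B}"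
        using AB(2) by (auto simp: image_iff)
    qed
    have mc: "mono_components V E \<phi> = components S V"
      unfolding mono_components_def W1 W2 cD[OF indA] cD[OF indB] components_cls[of S V]
        image_Un[symmetric] VAB ..
    have finS: "finite S" using finE SE finite_subset by blast
    have "cost V E \<phi> = card V - card (components S V)"
      unfolding cost_def mc by (rule sum_comps[OF finV])
    also have "\<dots> \<le> card S" using lower[OF finS finV] by linarith
    finally have "cost V E \<phi> \<le> k" using cS by linarith
    thus "\<exists>\<phi>. two_coloring V \<phi> \<and> cost V E \<phi> \<le> k" using tc by blast
  qed
qed

end
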